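(* Let $\alpha\ge0$, $2+2\alpha<p<2+\alpha+\sqrt{\alpha^2+\frac72\alpha+3}$ and $s\in[0,1]$. Assume that $$\int_0^1 I_t\left(\frac{2+\alpha}{p},1-\frac{2+\alpha}{p}\right)t^{2p-4\alpha-5}(1-t^4)^\alpha\,dt-\frac{1}{4(\alpha+1)}\le0.$$ Then $$B\left(\frac{2+\alpha}{p},1-\frac{2+\alpha}{p}\right)H_{\alpha,p}(s)\le\int_0^1\psi_{\alpha,p}(t)K_{\alpha,p}(s,t)\,dt.$$
   Context: $B(x,y)=\int_0^1 u^{x-1}(1-u)^{y-1}du$ is the Beta function, $B_t(x,y)=\int_0^t u^{x-1}(1-u)^{y-1}du$ and $I_t(x,y)=B_t(x,y)/B(x,y)$ the regularized incomplete Beta function. $\psi_{\alpha,p}(t)=t^{\frac{2+\alpha}{p}-1}(1-t)^{-\frac{2+\alpha}{p}}$ for $0<t<1$. $\binom{\alpha}{k}$ is the generalized binomial coefficient $\frac{\alpha(\alpha-1)\cdots(\alpha-k+1)}{k!}$, $\binom{\alpha}{0}=1$. $H_{\alpha,p}(s)=\sum_{k=0}^\infty\binom{\alpha}{k}(-1)^k\frac{1}{p-2\alpha-2+2k}-\frac{1}{2(\alpha+1)}(1-s^4)^{\alpha+1}$ for $0\le s\le1$, and $K_{\alpha,p}(s,t)=\sum_{k=0}^\infty\binom{\alpha}{k}(-1)^k\frac{1}{p-2\alpha-2+2k}\max\{s^2,t^2\}^{p-2\alpha-2+2k}$ for $0\le s\le1$, $0<t<1$. *)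

theory Defs
  imports "HOL-Analysis.Analysis"
begin

text \<open>Beta function: library Beta (Gamma quotient), equal to the Euler integral for positive arguments.
  Incomplete Beta function as a Lebesgue integral over the open interval (0,t).\<close>

definition Beta_inc :: "real \<Rightarrow> real \<Rightarrow> real \<Rightarrow> real" where
  "Beta_inc t x y = (LINT u:{0<..<t}|lborel. u powr (x - 1) * (1 - u) powr (y - 1))"

definition Beta_reg :: "real \<Rightarrow> real \<Rightarrow> real \<Rightarrow> real" where
  "Beta_reg t x y = Beta_inc t x y / Beta x y"

definition psi_ap :: "real \<Rightarrow> real \<Rightarrow> real \<Rightarrow> real" where
  "psi_ap \<alpha> p t = t powr ((2 + \<alpha>) / p - 1) * (1 - t) powr (- ((2 + \<alpha>) / p))"

definition H_ap :: "real \<Rightarrow> real \<Rightarrow> real \<Rightarrow> real" where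
  "H_ap \<alpha> p s = (\<Sum>k. (\<alpha> gchoose k) * (-1) ^ k * (1 / (p - 2 * \<alpha> - 2 + 2 * real k)))
      - 1 / (2 * (\<alpha> + 1)) * (1 - s ^ 4) powr (\<alpha> + 1)"

definition K_ap :: "real \<Rightarrow> real \<Rightarrow> real \<Rightarrow> real \<Rightarrow> real" where
  "K_ap \<alpha> p s t = (\<Sum>k. (\<alpha> gchoose k) * (-1) ^ k * (1 / (p - 2 * \<alpha> - 2 + 2 * real k))
      * max (s ^ 2) (t ^ 2) powr (p - 2 * \<alpha> - 2 + 2 * real k))"

end

theory Submission
  imports Defs
begin

definition cc :: "real \<Rightarrow> nat \<Rightarrow> real" where
  "cc \<alpha> k = (\<alpha> gchoose k) * (-1) ^ k"

lemma cc_Suc: "cc \<alpha> (Suc k) = cc \<alpha> k * ((real k - \<alpha>) / (real k + 1))"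
proof -
  have "\<alpha> * (\<alpha> gchoose k) = of_nat k * (\<alpha> gchoose k) + of_nat (Suc k) * (\<alpha> gchoose (Suc k))"
    by (rule gbinomial_mult_1)
  hence h: "(\<alpha> gchoose (Suc k)) = (\<alpha> gchoose k) * ((\<alpha> - real k) / (real k + 1))"
    by (simp add: field_simps)
  have e: "(real k - \<alpha>) / (real k + 1) = - ((\<alpha> - real k) / (real k + 1))"
    by (metis minus_diff_eq minus_divide_left)
  show ?thesis unfolding cc_def h e power_Suc by algebra
qed

lemma cc_sums:
  assumes "0 \<le> y" "y < 1"
  shows "(\<lambda>k. cc \<alpha> k * y ^ k) sums ((1 - y) powr \<alpha>)"
proof -
  have "\<bar>-y\<bar> < 1" using assms by auto
  from gen_binomial_real[OF this, of \<alpha>]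
  have "(\<lambda>k. (\<alpha> gchoose k) * (-y) ^ k) sums ((1 - y) powr \<alpha>)" by (simp only: add_uminus_conv_diff)
  also have "(\<lambda>k. (\<alpha> gchoose k) * (-y) ^ k) = (\<lambda>k. cc \<alpha> k * y ^ k)"
    by (rule ext) (simp only: cc_def power_minus[of y] mult.assoc)
  finally show ?thesis .
qed

lemma cc_sign:
  assumes "\<alpha> \<ge> 0"
  defines "N \<equiv> nat \<lceil>\<alpha>\<rceil>"
  defines "\<sigma> \<equiv> (if cc \<alpha> N \<ge> 0 then 1 else -1::real)"
  shows "\<And>k. k \<ge> N \<Longrightarrow> \<sigma> * cc \<alpha> k = \<bar>cc \<alpha> k\<bar>"
proof -
  fix k assume "k \<ge> N"
  thus "\<sigma> * cc \<alpha> k = \<bar>cc \<alpha> k\<bar>"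
  proof (induction k rule: dec_induct)
    case base
    then show ?case by (auto simp: \<sigma>_def)
  next
    case (step k)
    have "real k \<ge> \<alpha>" using step(1) unfolding N_def by linarith
    hence r: "(real k - \<alpha>) / (real k + 1) \<ge> 0" by simp
    have "\<sigma> * cc \<alpha> (Suc k) = (\<sigma> * cc \<alpha> k) * ((real k - \<alpha>) / (real k + 1))"
      by (simp add: cc_Suc)
    also have "\<dots> = \<bar>cc \<alpha> k\<bar> * ((real k - \<alpha>) / (real k + 1))" using step by simp
    also have "\<dots> = \<bar>cc \<alpha> k * ((real k - \<alpha>) / (real k + 1))\<bar>"
      by (simp only: abs_mult abs_of_nonneg[OF r])
    also have "\<dots> = \<bar>cc \<alpha> (Suc k)\<bar>" by (simp only: cc_Suc)
    finally show ?case .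
  qed
qed

lemma cc_abs_summable:
  assumes "\<alpha> \<ge> 0"
  shows "summable (\<lambda>k. \<bar>cc \<alpha> k\<bar>)"
proof -
  define N where "N = nat \<lceil>\<alpha>\<rceil>"
  define \<sigma> where "\<sigma> = (if cc \<alpha> N \<ge> 0 then 1 else -1::real)"
  have sg: "\<And>k. k \<ge> N \<Longrightarrow> \<sigma> * cc \<alpha> k = \<bar>cc \<alpha> k\<bar>"
    using cc_sign[OF assms] unfolding N_def \<sigma>_def by blast
  have s1: "\<bar>\<sigma>\<bar> = 1" by (simp add: \<sigma>_def)
  define A where "A = 1 + (\<Sum>k<N. \<bar>cc \<alpha> k\<bar>)"
  have bnd_y: "(\<Sum>k\<in>{N..<n}. \<sigma> * cc \<alpha> k * y ^ k) \<le> A" if y: "0 < y" "y < 1" for y n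
  proof -
    define e where "e = (\<lambda>k. if N \<le> k then \<sigma> * cc \<alpha> k * y ^ k else 0)"
    have e_nn: "e k \<ge> 0" for k
      unfolding e_def using sg[of k] y by (cases "N \<le> k") auto
    have s_full: "(\<lambda>k. cc \<alpha> k * y ^ k) sums ((1 - y) powr \<alpha>)"
      using cc_sums y by auto
    have s_fin: "(\<lambda>k. if k \<in> {..<N} then cc \<alpha> k * y ^ k else 0) sums (\<Sum>k<N. cc \<alpha> k * y ^ k)"
      by (rule sums_If_finite_set) simp
    have "(\<lambda>k. \<sigma> * (cc \<alpha> k * y ^ k - (if k \<in> {..<N} then cc \<alpha> k * y ^ k else 0))) sums
           (\<sigma> * ((1 - y) powr \<alpha> - (\<Sum>k<N. cc \<alpha> k * y ^ k)))"
      by (intro sums_mult sums_diff s_full s_fin)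
    also have "(\<lambda>k. \<sigma> * (cc \<alpha> k * y ^ k - (if k \<in> {..<N} then cc \<alpha> k * y ^ k else 0))) = e"
      by (auto simp: e_def fun_eq_iff)
    finally have se: "e sums (\<sigma> * ((1 - y) powr \<alpha> - (\<Sum>k<N. cc \<alpha> k * y ^ k)))" .
    have "(\<Sum>k\<in>{N..<n}. \<sigma> * cc \<alpha> k * y ^ k) = (\<Sum>k\<in>{N..<n}. e k)"
      by (auto simp: e_def intro!: sum.cong)
    also have "\<dots> \<le> suminf e"
      by (rule sum_le_suminf) (use se e_nn in \<open>auto simp: sums_iff\<close>)
    also have "\<dots> = \<sigma> * ((1 - y) powr \<alpha> - (\<Sum>k<N. cc \<alpha> k * y ^ k))"
      using se by (simp add: sums_iff)
    also have "\<dots> \<le> \<bar>\<sigma> * ((1 - y) powr \<alpha> - (\<Sum>k<N. cc \<alpha> k * y ^ k))\<bar>" by simp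
    also have "\<dots> \<le> \<bar>(1 - y) powr \<alpha>\<bar> + \<bar>\<Sum>k<N. cc \<alpha> k * y ^ k\<bar>"
      using abs_triangle_ineq4[of "(1 - y) powr \<alpha>" "\<Sum>k<N. cc \<alpha> k * y ^ k"] by (simp add: abs_mult s1)
    also have "\<bar>(1 - y) powr \<alpha>\<bar> \<le> 1"
      using y assms by (simp add: powr_le1)
    also have "\<bar>\<Sum>k<N. cc \<alpha> k * y ^ k\<bar> \<le> (\<Sum>k<N. \<bar>cc \<alpha> k\<bar>)"
    proof -
      have "\<bar>\<Sum>k<N. cc \<alpha> k * y ^ k\<bar> \<le> (\<Sum>k<N. \<bar>cc \<alpha> k * y ^ k\<bar>)" by (rule sum_abs)
      also have "\<dots> \<le> (\<Sum>k<N. \<bar>cc \<alpha> k\<bar>)"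
        using y by (intro sum_mono) (simp add: abs_mult mult_left_le power_le_one)
      finally show ?thesis .
    qed
    finally show ?thesis by (simp add: A_def)
  qed
  have bnd1: "(\<Sum>k\<in>{N..<n}. \<sigma> * cc \<alpha> k) \<le> A" for n
  proof -
    let ?P = "\<lambda>y. (\<Sum>k\<in>{N..<n}. \<sigma> * cc \<alpha> k * y ^ k)"
    have "(?P \<longlongrightarrow> ?P 1) (at_left 1)"
      by (intro tendsto_intros)
    moreover have "eventually (\<lambda>y. ?P y \<le> A) (at_left (1::real))"
      by (rule eventually_at_leftI[of 0]) (use bnd_y in auto)
    ultimately have "?P 1 \<le> A"
      by (intro tendsto_upperbound) (auto simp: trivial_limit_at_left_real)
    thus ?thesis by simp
  qed
  show ?thesis
  proof (rule bounded_imp_summable)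
    fix n
    have "(\<Sum>k\<le>n. \<bar>cc \<alpha> k\<bar>) \<le> (\<Sum>k<max (Suc n) N. \<bar>cc \<alpha> k\<bar>)"
      by (intro sum_mono2) auto
    also have "\<dots> = (\<Sum>k<N. \<bar>cc \<alpha> k\<bar>) + (\<Sum>k\<in>{N..<max (Suc n) N}. \<bar>cc \<alpha> k\<bar>)"
      unfolding lessThan_atLeast0 by (rule sum.atLeastLessThan_concat[symmetric]) auto
    also have "(\<Sum>k\<in>{N..<max (Suc n) N}. \<bar>cc \<alpha> k\<bar>) = (\<Sum>k\<in>{N..<max (Suc n) N}. \<sigma> * cc \<alpha> k)"
      using sg by (intro sum.cong) auto
    also have "\<dots> \<le> A" by (rule bnd1)
    finally show "(\<Sum>k\<le>n. \<bar>cc \<alpha> k\<bar>) \<le> (\<Sum>k<N. \<bar>cc \<alpha> k\<bar>) + A" by simp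
  qed auto
qed


definition Sr :: "real \<Rightarrow> real \<Rightarrow> real \<Rightarrow> real" where
  "Sr \<alpha> p r = (\<Sum>k. (\<alpha> gchoose k) * (-1) ^ k * (1 / (p - 2 * \<alpha> - 2 + 2 * real k))
      * r powr (p - 2 * \<alpha> - 2 + 2 * real k))"

lemma K_ap_Sr: "K_ap \<alpha> p s t = Sr \<alpha> p (max (s^2) (t^2))"
  by (simp add: K_ap_def Sr_def)

lemma H_ap_Sr: "H_ap \<alpha> p s = Sr \<alpha> p 1 - 1 / (2 * (\<alpha> + 1)) * (1 - s ^ 4) powr (\<alpha> + 1)"
  by (simp add: H_ap_def Sr_def)

lemma Sr_term_bound:
  assumes "p - 2 * \<alpha> - 2 > 0" "0 \<le> r" "r \<le> 1"
  shows "\<bar>(\<alpha> gchoose k) * (-1) ^ k * (1 / (p - 2 * \<alpha> - 2 + 2 * real k))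
      * r powr (p - 2 * \<alpha> - 2 + 2 * real k)\<bar> \<le> \<bar>cc \<alpha> k\<bar> / (p - 2 * \<alpha> - 2)"
proof -
  define q where "q = p - 2 * \<alpha> - 2"
  have q: "q > 0" using assms q_def by simp
  have "\<bar>(\<alpha> gchoose k) * (-1) ^ k * (1 / (q + 2 * real k)) * r powr (q + 2 * real k)\<bar>
      = \<bar>cc \<alpha> k\<bar> * (1 / (q + 2 * real k)) * r powr (q + 2 * real k)"
    using q by (simp add: cc_def abs_mult)
  also have "\<dots> \<le> \<bar>cc \<alpha> k\<bar> * (1 / q) * 1"
    using q assms by (intro mult_mono frac_le powr_le1) auto
  finally show ?thesis by (simp add: q_def)
qed

lemma cc_div_summable:
  assumes "\<alpha> \<ge> 0"
  shows "summable (\<lambda>k. \<bar>cc \<alpha> k\<bar> / c)"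
  using cc_abs_summable[OF assms] by (rule summable_divide)

lemma Sr_cont:
  assumes "\<alpha> \<ge> 0" "p - 2 * \<alpha> - 2 > 0"
  shows "continuous_on {0..1} (Sr \<alpha> p)"
proof -
  define f where "f = (\<lambda>k (r::real). (\<alpha> gchoose k) * (-1) ^ k * (1 / (p - 2 * \<alpha> - 2 + 2 * real k))
      * r powr (p - 2 * \<alpha> - 2 + 2 * real k))"
  have ul: "uniform_limit {0..1} (\<lambda>n x. \<Sum>i<n. f i x) (\<lambda>x. suminf (\<lambda>i. f i x)) sequentially"
  proof (rule Weierstrass_m_test)
    fix n and x :: real assume "x \<in> {0..1}"
    thus "norm (f n x) \<le> \<bar>cc \<alpha> n\<bar> / (p - 2 * \<alpha> - 2)"
      unfolding f_def real_norm_def using Sr_term_bound[OF assms(2)] by auto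
  qed (rule cc_div_summable[OF assms(1)])
  have "continuous_on {0..1} (\<lambda>x. suminf (\<lambda>i. f i x))"
  proof (rule uniform_limit_theorem[OF _ ul])
    show "\<forall>\<^sub>F n in sequentially. continuous_on {0..1} (\<lambda>x. \<Sum>i<n. f i x)"
      unfolding f_def using assms
      by (intro always_eventually allI continuous_on_sum continuous_on_mult continuous_on_const
          continuous_on_powr' continuous_on_id) auto
  qed simp
  moreover have "Sr \<alpha> p = (\<lambda>x. suminf (\<lambda>i. f i x))"
    by (simp add: Sr_def f_def fun_eq_iff)
  ultimately show ?thesis by simp
qed

lemma Sr_summable:
  assumes "\<alpha> \<ge> 0" "p - 2 * \<alpha> - 2 > 0" "0 \<le> r" "r \<le> 1"
  shows "summable (\<lambda>k. (\<alpha> gchoose k) * (-1) ^ k * (1 / (p - 2 * \<alpha> - 2 + 2 * real k))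
      * r powr (p - 2 * \<alpha> - 2 + 2 * real k))"
  by (rule summable_comparison_test'[OF cc_div_summable[OF assms(1)], of 0])
     (use Sr_term_bound[OF assms(2-4)] in auto)

lemma Sr_deriv:
  assumes "\<alpha> \<ge> 0" "p - 2 * \<alpha> - 2 > 0" "0 < r" "r < 1"
  shows "(Sr \<alpha> p has_real_derivative r powr (p - 2 * \<alpha> - 2 - 1) * (1 - r^2) powr \<alpha>) (at r)"
proof -
  define q where "q = p - 2 * \<alpha> - 2"
  have q: "q > 0" using assms q_def by simp
  define f where "f = (\<lambda>k (x::real). (\<alpha> gchoose k) * (-1) ^ k * (1 / (q + 2 * real k))
      * x powr (q + 2 * real k))"
  define f' where "f' = (\<lambda>k (x::real). cc \<alpha> k * x powr (q + 2 * real k - 1))"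
  define S where "S = {r/2..1}"
  define M0 where "M0 = max 1 ((r/2) powr (q - 1))"
  have der: "(f n has_field_derivative f' n x) (at x within S)" if "x \<in> S" for n x
  proof -
    have x: "x > 0" using that assms by (auto simp: S_def)
    have e: "q + 2 * real n > 0" using q by simp
    have "((\<lambda>x. (\<alpha> gchoose n) * (-1) ^ n * (1 / (q + 2 * real n)) * x powr (q + 2 * real n))
       has_real_derivative (\<alpha> gchoose n) * (-1) ^ n * (1 / (q + 2 * real n)) *
         ((q + 2 * real n) * x powr (q + 2 * real n - 1))) (at x)"
      by (intro DERIV_cmult has_real_derivative_powr x)
    also have "(\<alpha> gchoose n) * (-1) ^ n * (1 / (q + 2 * real n)) *
         ((q + 2 * real n) * x powr (q + 2 * real n - 1)) = f' n x"
      using e by (simp add: f'_def cc_def)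
    finally show ?thesis unfolding f_def by (rule has_field_derivative_at_within)
  qed
  have bnd: "norm (f' n x) \<le> \<bar>cc \<alpha> n\<bar> * M0" if "x \<in> S" for n x
  proof -
    have x: "x > 0" "x \<ge> r/2" "x \<le> 1" using that assms by (auto simp: S_def)
    have "x powr (q + 2 * real n - 1) = x powr ((q - 1) + 2 * real n)"
      by (simp add: algebra_simps)
    also have "\<dots> = x powr (q - 1) * x powr (2 * real n)"
      by (rule powr_add)
    also have "\<dots> \<le> M0 * 1"
    proof (intro mult_mono)
      show "x powr (q - 1) \<le> M0"
      proof (cases "q - 1 \<ge> 0")
        case True
        then show ?thesis using x by (auto simp: M0_def intro: order.trans[OF powr_le1])
      next
        case False
        hence "x powr (q - 1) \<le> (r/2) powr (q - 1)"
          using x assms by (intro powr_mono2') auto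
        then show ?thesis by (auto simp: M0_def)
      qed
    qed (use x in \<open>auto intro: powr_le1 simp: M0_def\<close>)
    finally show ?thesis unfolding f'_def using x
      by (simp add: abs_mult mult_left_mono)
  qed
  have sM: "summable (\<lambda>n. \<bar>cc \<alpha> n\<bar> * M0)"
    by (rule summable_mult2[OF cc_abs_summable[OF assms(1)]])
  have ul': "uniform_limit S (\<lambda>n x. \<Sum>i<n. f' i x) (\<lambda>x. \<Sum>i. f' i x) sequentially"
  proof (rule Weierstrass_m_test[where M="\<lambda>n. \<bar>cc \<alpha> n\<bar> * M0"])
    fix n x assume "x \<in> S"
    thus "norm (f' n x) \<le> \<bar>cc \<alpha> n\<bar> * M0" by (rule bnd)
  qed (rule sM)
  have uc: "uniformly_convergent_on S (\<lambda>n x. \<Sum>i<n. f' i x)"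
    unfolding uniformly_convergent_on_def by (rule exI[of _ "\<lambda>x. \<Sum>i. f' i x"]) (rule ul')
  have sm: "summable (\<lambda>n. f n r)"
    using Sr_summable[OF assms(1,2), of r] assms unfolding f_def q_def by auto
  have int: "r \<in> interior S" using assms by (auto simp: S_def)
  have "((\<lambda>x. \<Sum>n. f n x) has_field_derivative (\<Sum>n. f' n r)) (at r)"
    by (rule has_field_derivative_series'(2)[OF _ der uc _ sm int]) (use assms in \<open>auto simp: S_def\<close>)
  moreover have "(\<lambda>x. \<Sum>n. f n x) = Sr \<alpha> p"
    by (simp add: Sr_def f_def q_def fun_eq_iff)
  moreover have "(\<Sum>n. f' n r) = r powr (q - 1) * (1 - r^2) powr \<alpha>"
  proof -
    have "(\<lambda>n. cc \<alpha> n * (r^2) ^ n) sums ((1 - r^2) powr \<alpha>)"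
      using assms by (intro cc_sums) (auto simp: power_less_one_iff)
    hence "(\<lambda>n. r powr (q - 1) * (cc \<alpha> n * (r^2) ^ n)) sums (r powr (q - 1) * (1 - r^2) powr \<alpha>)"
      by (rule sums_mult)
    also have "(\<lambda>n. r powr (q - 1) * (cc \<alpha> n * (r^2) ^ n)) = (\<lambda>n. f' n r)"
    proof
      fix n
      have "r powr (q + 2 * real n - 1) = r powr ((q - 1) + 2 * real n)"
        by (simp add: algebra_simps)
      also have "\<dots> = r powr (q - 1) * r powr (2 * real n)"
        by (rule powr_add)
      also have "r powr (2 * real n) = r powr (real (2 * n))" by simp
      also have "\<dots> = r ^ (2 * n)" using assms by (intro powr_realpow) auto
      also have "\<dots> = (r^2) ^ n" by (simp add: power_mult)
      finally show "r powr (q - 1) * (cc \<alpha> n * (r^2) ^ n) = f' n r"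
        by (simp add: f'_def)
    qed
    finally show ?thesis by (simp add: sums_iff)
  qed
  ultimately show ?thesis by (simp add: q_def)
qed

definition bf :: "real \<Rightarrow> real \<Rightarrow> real" where
  "bf a t = t powr (a - 1) * (1 - t) powr (- a)"

lemma bf_nonneg: "bf a t \<ge> 0"
  by (simp add: bf_def)

lemma bf_has_integral:
  assumes "0 < a" "a < 1"
  shows "(bf a has_integral Beta a (1 - a)) {0..1}"
  using has_integral_Beta_real[of a "1 - a"] assms by (simp add: bf_def[abs_def])

lemma bf_integrable:
  assumes "0 < a" "a < 1"
  shows "set_integrable lborel {0..1} (bf a)"
  using integrable_Beta[of a "1 - a"] assms by (simp add: bf_def[abs_def])

lemma bf_integrable_on:
  assumes "0 < a" "a < 1"
  shows "bf a integrable_on {0..1}"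
  using bf_has_integral[OF assms] by blast

lemma Beta_pos:
  fixes a :: real
  assumes "0 < a" "a < 1"
  shows "Beta a (1 - a) > 0"
  proof -
  have "Gamma a > 0" "Gamma (1 - a) > 0" using assms by auto
  thus ?thesis by (simp add: Beta_def)
qed

lemma Beta_inc_eq:
  assumes "0 < a" "a < 1" "0 \<le> t" "t \<le> 1"
  shows "Beta_inc t a (1 - a) = integral {0..t} (bf a)"
proof -
  have si: "set_integrable lborel {0<..<t} (bf a)"
    by (rule set_integrable_subset[OF bf_integrable[OF assms(1,2)]]) (use assms in auto)
  have "Beta_inc t a (1 - a) = (LINT u:{0<..<t}|lborel. bf a u)"
    by (simp add: Beta_inc_def bf_def)
  also have "\<dots> = integral {0<..<t} (bf a)"
    by (rule set_borel_integral_eq_integral(2)[OF si])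
  also have "\<dots> = integral {0..t} (bf a)"
    by (simp add: integral_open_interval_real)
  finally show ?thesis .
qed

lemma indef_deriv:
  fixes f :: "real \<Rightarrow> real"
  assumes "f integrable_on {a..b}" "a < x" "x < b" "isCont f x"
  shows "((\<lambda>t. integral {a..t} f) has_real_derivative f x) (at x)"
proof -
  have "((\<lambda>u. integral {a..u} f) has_vector_derivative f x) (at x within ({a..b} - {}))"
    by (rule integral_has_vector_derivative_continuous_at[OF assms(1)])
       (use assms in \<open>auto intro: continuous_at_imp_continuous_at_within\<close>)
  hence "((\<lambda>u. integral {a..u} f) has_vector_derivative f x) (at x)"
    using assms by (simp add: at_within_Icc_at)
  thus ?thesis by (simp add: has_real_derivative_iff_has_vector_derivative)
qed

lemma bf_isCont:
  assumes "0 < x" "x < 1"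
  shows "isCont (bf a) x"
  unfolding bf_def using assms by (intro continuous_intros) auto

lemma Bi_deriv:
  assumes "0 < a" "a < 1" "0 < x" "x < 1"
  shows "((\<lambda>t. integral {0..t} (bf a)) has_real_derivative bf a x) (at x)"
  by (rule indef_deriv[OF bf_integrable_on[OF assms(1,2)] assms(3,4) bf_isCont[OF assms(3,4)]])

lemma Bi_cont:
  assumes "0 < a" "a < 1"
  shows "continuous_on {0..1} (\<lambda>t. integral {0..t} (bf a))"
  by (rule indefinite_integral_continuous_1[OF bf_integrable_on[OF assms]])

lemma Bi_nonneg:
  assumes "0 < a" "a < 1" "0 \<le> t" "t \<le> 1"
  shows "integral {0..t} (bf a) \<ge> 0"
proof -
  have "bf a integrable_on {0..t}"
    by (rule integrable_on_subinterval[OF bf_integrable_on[OF assms(1,2)]]) (use assms in auto)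
  thus ?thesis by (intro integral_nonneg) (auto simp: bf_nonneg)
qed

lemma Bi_one:
  assumes "0 < a" "a < 1"
  shows "integral {0..1} (bf a) = Beta a (1 - a)"
  using bf_has_integral[OF assms] by (rule integral_unique)

lemma L_quasi:
  fixes a m :: real
  assumes "0 < a" "a < m"
  defines "L \<equiv> (\<lambda>t. (a - m) * ln t - a * ln (1 - t))"
  assumes "0 < y" "y < z" "z < w" "w < 1"
  shows "L z \<le> max (L y) (L w)"
proof -
  define L' where "L' = (\<lambda>t. (a - m) / t + a / (1 - t))"
  have der: "(L has_real_derivative L' t) (at t)" if "0 < t" "t < 1" for t
    unfolding L_def L'_def using that
    by (auto intro!: derivative_eq_intros simp: field_simps)
  define ts where "ts = (m - a) / m"
  have m: "m > 0" using assms by simp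
  have L'neg: "L' t \<le> 0" if "0 < t" "t < 1" "t \<le> ts" for t
  proof -
    have "m * t \<le> m - a" using that m by (simp add: ts_def field_simps)
    hence "a * t \<le> (m - a) * (1 - t)" by (simp add: algebra_simps)
    hence "a * t + (a - m) * (1 - t) \<le> 0" by (simp add: algebra_simps)
    hence "((a - m) * (1 - t) + a * t) / (t * (1 - t)) \<le> 0"
      using that by (intro divide_nonpos_pos) auto
    thus ?thesis using that unfolding L'_def by (simp add: field_simps)
  qed
  have L'pos: "L' t \<ge> 0" if "0 < t" "t < 1" "t \<ge> ts" for t
  proof -
    have "m * t \<ge> m - a" using that m by (simp add: ts_def field_simps)
    hence "a * t \<ge> (m - a) * (1 - t)" by (simp add: algebra_simps)
    hence "a * t + (a - m) * (1 - t) \<ge> 0" by (simp add: algebra_simps)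
    hence "((a - m) * (1 - t) + a * t) / (t * (1 - t)) \<ge> 0"
      using that by (intro divide_nonneg_pos) auto
    thus ?thesis using that unfolding L'_def by (simp add: field_simps)
  qed
  show ?thesis
  proof (cases "z \<le> ts")
    case True
    obtain \<xi> where \<xi>: "y < \<xi>" "\<xi> < z" "L z - L y = (z - y) * L' \<xi>"
      using MVT2[of y z L L'] der assms by force
    have "L' \<xi> \<le> 0" using \<xi> True assms by (intro L'neg) auto
    hence "(z - y) * L' \<xi> \<le> 0" using \<xi> by (intro mult_nonneg_nonpos) auto
    hence "L z \<le> L y" using \<xi> by simp
    thus ?thesis by simp
  next
    case False
    obtain \<xi> where \<xi>: "z < \<xi>" "\<xi> < w" "L w - L z = (w - z) * L' \<xi>"
      using MVT2[of z w L L'] der assms by force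
    have "L' \<xi> \<ge> 0" using \<xi> False assms by (intro L'pos) auto
    hence "(w - z) * L' \<xi> \<ge> 0" using \<xi> by (intro mult_nonneg_nonneg) auto
    hence "L z \<le> L w" using \<xi> by simp
    thus ?thesis by simp
  qed
qed

lemma mvt_helper:
  fixes f f' :: "real \<Rightarrow> real"
  assumes "a < b" "continuous_on {a..b} f"
    "\<And>x. a < x \<Longrightarrow> x < b \<Longrightarrow> (f has_real_derivative f' x) (at x)"
  shows "\<exists>z. a < z \<and> z < b \<and> f b - f a = (b - a) * f' z"
proof -
  obtain l z where lz: "a < z" "z < b" "DERIV f z :> l" "f b - f a = (b - a) * l"
    using MVT[OF assms(1,2)] assms(3) real_differentiable_def by blast
  have "l = f' z" using DERIV_unique[OF lz(3) assms(3)[OF lz(1,2)]] .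
  thus ?thesis using lz by blast
qed

lemma sign_lemma:
  fixes a m B :: real and Bi :: "real \<Rightarrow> real"
  assumes a: "0 < a" "a < 1" and am: "a < m" and B: "B > 0"
    and cont: "continuous_on {0..1} Bi" and B0: "Bi 0 = 0" and B1: "Bi 1 = B"
    and der: "\<And>x. 0 < x \<Longrightarrow> x < 1 \<Longrightarrow> (Bi has_real_derivative bf a x) (at x)"
  defines "\<phi> \<equiv> (\<lambda>t. Bi t / B - t powr m)"
  assumes t: "0 < t0" "t0 < t1" "t1 < 1" and neg: "\<phi> t0 < 0"
  shows "\<phi> t1 \<le> 0"
proof (rule ccontr)
  assume "\<not> \<phi> t1 \<le> 0"
  hence pos: "\<phi> t1 > 0" by simp
  have m: "m > 0" using a am by simp
  define \<phi>' where "\<phi>' = (\<lambda>x. bf a x / B - m * x powr (m - 1))"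
  have dphi: "(\<phi> has_real_derivative \<phi>' x) (at x)" if "0 < x" "x < 1" for x
    unfolding \<phi>_def \<phi>'_def
    by (intro derivative_eq_intros der that has_real_derivative_powr) (use that B der in auto)
  have cphi: "continuous_on {0..1} \<phi>"
    unfolding \<phi>_def using m B
    by (intro continuous_on_diff continuous_on_divide cont continuous_on_const continuous_on_powr'
        continuous_on_id) auto
  have phi0: "\<phi> 0 = 0" by (simp add: \<phi>_def B0)
  have phi1: "\<phi> 1 = 0" using B by (simp add: \<phi>_def B1)
  have mv: "\<exists>z. lo < z \<and> z < hi \<and> \<phi> hi - \<phi> lo = (hi - lo) * \<phi>' z"
    if "0 \<le> lo" "lo < hi" "hi \<le> 1" for lo hi
  proof (rule mvt_helper)
    show "lo < hi" by (rule that(2))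
    show "continuous_on {lo..hi} \<phi>" by (rule continuous_on_subset[OF cphi]) (use that in auto)
    fix x :: real assume "lo < x" "x < hi"
    thus "(\<phi> has_real_derivative \<phi>' x) (at x)" using that by (intro dphi) auto
  qed
  obtain \<xi>0 where x0: "0 < \<xi>0" "\<xi>0 < t0" "\<phi> t0 - \<phi> 0 = (t0 - 0) * \<phi>' \<xi>0"
    using mv[of 0 t0] t by auto
  obtain \<xi>1 where x1: "t0 < \<xi>1" "\<xi>1 < t1" "\<phi> t1 - \<phi> t0 = (t1 - t0) * \<phi>' \<xi>1"
    using mv[of t0 t1] t by auto
  obtain \<xi>2 where x2: "t1 < \<xi>2" "\<xi>2 < 1" "\<phi> 1 - \<phi> t1 = (1 - t1) * \<phi>' \<xi>2"
    using mv[of t1 1] t by auto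
  have d0: "\<phi>' \<xi>0 < 0"
  proof -
    have "t0 * \<phi>' \<xi>0 < 0" using x0 phi0 neg by simp
    thus ?thesis using t by (simp add: mult_less_0_iff)
  qed
  have d1: "\<phi>' \<xi>1 > 0"
  proof -
    have "(t1 - t0) * \<phi>' \<xi>1 > 0" using x1 pos neg by simp
    thus ?thesis using t by (simp add: zero_less_mult_iff)
  qed
  have d2: "\<phi>' \<xi>2 < 0"
  proof -
    have "(1 - t1) * \<phi>' \<xi>2 < 0" using x2 phi1 pos by simp
    thus ?thesis using t by (simp add: mult_less_0_iff)
  qed
  define c where "c = ln (B * m)"
  define L where "L = (\<lambda>t. (a - m) * ln t - a * ln (1 - t))"
  have key: "\<phi>' x < 0 \<longleftrightarrow> L x < c" "\<phi>' x > 0 \<longleftrightarrow> L x > c" if "0 < x" "x < 1" for x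
  proof -
    define A1 where "A1 = (a - 1) * ln x - a * ln (1 - x)"
    define A2 where "A2 = c + (m - 1) * ln x"
    have e1: "bf a x = exp A1"
      using that by (simp add: bf_def powr_def A1_def exp_diff exp_minus divide_inverse)
    have e2: "B * (m * x powr (m - 1)) = exp A2"
      using that B m by (simp add: powr_def A2_def c_def exp_add)
    have "\<phi>' x = (exp A1 - exp A2) / B"
      using B e1 e2 by (simp add: \<phi>'_def field_simps)
    hence s: "\<phi>' x < 0 \<longleftrightarrow> A1 < A2" "\<phi>' x > 0 \<longleftrightarrow> A1 > A2"
      using B by (simp_all add: divide_less_0_iff zero_less_divide_iff)
    have "L x = A1 - A2 + c" by (simp add: L_def A1_def A2_def algebra_simps)
    thus "\<phi>' x < 0 \<longleftrightarrow> L x < c" "\<phi>' x > 0 \<longleftrightarrow> L x > c" using s by linarith+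
  qed
  have "L \<xi>0 < c" using key(1)[of \<xi>0] d0 x0 t by auto
  moreover have "L \<xi>1 > c" using key(2)[of \<xi>1] d1 x1 x0 t by auto
  moreover have "L \<xi>2 < c" using key(1)[of \<xi>2] d2 x2 t by auto
  moreover have "L \<xi>1 \<le> max (L \<xi>0) (L \<xi>2)"
    unfolding L_def by (rule L_quasi) (use a am x0 x1 x2 in auto)
  ultimately show False by linarith
qed

lemma lint_eq_integral:
  fixes f :: "real \<Rightarrow> real"
  assumes "f absolutely_integrable_on S" "continuous_on S f" "open S"
  shows "set_integrable lborel S f" "(LINT x:S|lborel. f x) = integral S f"
proof -
  have m: "(\<lambda>x. indicator S x *\<^sub>R f x) \<in> borel_measurable borel"
    by (rule borel_measurable_continuous_on_indicator[OF borel_open[OF assms(3)] assms(2)])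
  have m': "(\<lambda>x. indicator S x *\<^sub>R f x) \<in> borel_measurable lborel"
    using m by (simp only: measurable_lborel2)
  have i: "integrable lebesgue (\<lambda>x. indicator S x *\<^sub>R f x)"
    using assms(1) unfolding set_integrable_def .
  have "integrable lborel (\<lambda>x. indicator S x *\<^sub>R f x)"
    using integrable_completion[OF m'] i by blast
  thus si: "set_integrable lborel S f" unfolding set_integrable_def .
  show "(LINT x:S|lborel. f x) = integral S f"
    by (rule set_borel_integral_eq_integral(2)[OF si])
qed

lemma prod_lint:
  fixes f g :: "real \<Rightarrow> real"
  assumes fc: "continuous_on {0<..<1} f" and fb: "bounded (f ` {0<..<1})" and g: "g integrable_on {0..1}" "\<And>x. g x \<ge> 0"
    "continuous_on {0<..<1} g"
  shows "set_integrable lborel {0<..<1} (\<lambda>x. g x * f x)"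
    "(LINT x:{0<..<1}|lborel. g x * f x) = integral {0..1} (\<lambda>x. g x * f x)"
    "(\<lambda>x. g x * f x) integrable_on {0..1}"
proof -
  have g': "g integrable_on {0<..<1}" using g(1) by (simp add: integrable_on_open_interval_real)
  have ga: "g absolutely_integrable_on {0<..<1}"
    using g' g(2) by (subst absolutely_integrable_on_iff_nonneg) auto
  have fm: "f \<in> borel_measurable (lebesgue_on {0<..<1})"
    by (rule continuous_imp_measurable_on_sets_lebesgue[OF fc]) auto
  have "(\<lambda>x. f x * g x) absolutely_integrable_on {0<..<1}"
    by (rule absolutely_integrable_bounded_measurable_product_real[OF fm _ fb ga]) auto
  hence ai: "(\<lambda>x. g x * f x) absolutely_integrable_on {0<..<1}" by (simp add: mult.commute)
  have c: "continuous_on {0<..<1} (\<lambda>x. g x * f x)"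
    by (intro continuous_on_mult g(3) fc)
  show si: "set_integrable lborel {0<..<1} (\<lambda>x. g x * f x)"
    by (rule lint_eq_integral(1)[OF ai c]) auto
  have "(LINT x:{0<..<1}|lborel. g x * f x) = integral {0<..<1} (\<lambda>x. g x * f x)"
    by (rule lint_eq_integral(2)[OF ai c]) auto
  also have "\<dots> = integral {0..1} (\<lambda>x. g x * f x)"
    by (simp add: integral_open_interval_real)
  finally show "(LINT x:{0<..<1}|lborel. g x * f x) = integral {0..1} (\<lambda>x. g x * f x)" .
  have "(\<lambda>x. g x * f x) integrable_on {0<..<1}"
    using set_borel_integral_eq_integral(1)[OF si] .
  thus "(\<lambda>x. g x * f x) integrable_on {0..1}" by (simp add: integrable_on_open_interval_real)
qed

lemma bf_cont_open: "continuous_on {0<..<1} (bf a)"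
  by (intro continuous_at_imp_continuous_on ballI bf_isCont) auto

lemma mono_from_deriv:
  fixes f f' :: "real \<Rightarrow> real"
  assumes "lo \<le> hi" "continuous_on {lo..hi} f"
    "\<And>x. lo < x \<Longrightarrow> x < hi \<Longrightarrow> (f has_real_derivative f' x) (at x)"
    "\<And>x. lo < x \<Longrightarrow> x < hi \<Longrightarrow> f' x \<ge> 0"
  shows "f lo \<le> f hi"
proof (cases "lo = hi")
  case False
  hence "lo < hi" using assms by simp
  then obtain z where z: "lo < z" "z < hi" "f hi - f lo = (hi - lo) * f' z"
    using mvt_helper[of lo hi f f'] assms by blast
  have "(hi - lo) * f' z \<ge> 0" using z assms(4)[OF z(1,2)] \<open>lo < hi\<close> by simp
  thus ?thesis using z by simp
qed simp

lemma mono_from_deriv':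
  fixes f f' :: "real \<Rightarrow> real"
  assumes "lo \<le> hi" "continuous_on {lo..hi} f"
    "\<And>x. lo < x \<Longrightarrow> x < hi \<Longrightarrow> (f has_real_derivative f' x) (at x)"
    "\<And>x. lo < x \<Longrightarrow> x < hi \<Longrightarrow> f' x \<le> 0"
  shows "f hi \<le> f lo"
proof -
  have "(\<lambda>x. - f x) lo \<le> (\<lambda>x. - f x) hi"
    by (rule mono_from_deriv[where f' = "\<lambda>x. - f' x"])
       (use assms in \<open>auto intro!: continuous_intros derivative_intros\<close>)
  thus ?thesis by simp
qed

theorem lemma3p4:
  fixes \<alpha> p s :: real
  assumes "\<alpha> \<ge> 0"
    and "2 + 2 * \<alpha> < p"
    and "p < 2 + \<alpha> + sqrt (\<alpha>\<^sup>2 + 7 / 2 * \<alpha> + 3)"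
    and "0 \<le> s" and "s \<le> 1"
    and "(LINT t:{0<..<1}|lborel.
            Beta_reg t ((2 + \<alpha>) / p) (1 - (2 + \<alpha>) / p) * t powr (2 * p - 4 * \<alpha> - 5)
            * (1 - t ^ 4) powr \<alpha>) - 1 / (4 * (\<alpha> + 1)) \<le> 0"
  shows "Beta ((2 + \<alpha>) / p) (1 - (2 + \<alpha>) / p) * H_ap \<alpha> p s
           \<le> (LINT t:{0<..<1}|lborel. psi_ap \<alpha> p t * K_ap \<alpha> p s t)"
proof -
  note al = assms(1) and hyp = assms(6)
  define a where "a = (2 + \<alpha>) / p"
  define q where "q = p - 2 * \<alpha> - 2"
  define m where "m = 4 - 2 * q"
  define e where "e = 2 * p - 4 * \<alpha> - 5"
  have p0: "p > 0" using assms(1,2) by linarith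
  have q0: "q > 0" using assms(2) by (simp add: q_def)
  have qS: "p - 2 * \<alpha> - 2 > 0" using q0 by (simp add: q_def)
  have e_q: "e = 2 * q - 1" by (simp add: e_def q_def)
  have e1: "e > -1" using q0 e_q by simp
  have em: "e + m = 3" by (simp add: e_q m_def)
  have a0: "0 < a" using p0 al by (simp add: a_def)
  have a1: "a < 1" using p0 assms(1,2) by (simp add: a_def divide_less_eq)
  have am: "a < m"
  proof -
    define u where "u = p - (2 + \<alpha>)"
    define X where "X = \<alpha>^2 + 7/2*\<alpha> + 3"
    have X0: "X \<ge> 0" using al by (simp add: X_def)
    have u0: "u \<ge> 0" using assms(1,2) by (simp add: u_def)
    have "u < sqrt X" using assms(3) by (simp add: u_def X_def)
    hence "u^2 < (sqrt X)^2" using u0 by (intro power_strict_mono) auto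
    hence uX: "u^2 < X" using X0 by simp
    have "m * p - (2 + \<alpha>) = 2 * (X - u^2)"
      by (simp add: m_def q_def u_def X_def power2_eq_square algebra_simps)
    hence "m * p > 2 + \<alpha>" using uX by simp
    thus ?thesis using p0 by (simp add: a_def divide_less_eq mult.commute)
  qed
  define B where "B = Beta a (1 - a)"
  have B0: "B > 0" using Beta_pos[OF a0 a1] by (simp add: B_def)
  define Bi where "Bi = (\<lambda>t. integral {0..t} (bf a))"
  have Bic: "continuous_on {0..1} Bi" unfolding Bi_def by (rule Bi_cont[OF a0 a1])
  have Bi0: "Bi 0 = 0" by (simp add: Bi_def)
  have Bi1: "Bi 1 = B" unfolding Bi_def B_def by (rule Bi_one[OF a0 a1])
  have dBi: "(Bi has_real_derivative bf a x) (at x)" if "0 < x" "x < 1" for x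
    unfolding Bi_def by (rule Bi_deriv[OF a0 a1 that])
  define S where "S = Sr \<alpha> p"
  have Scont: "continuous_on {0..1} S" unfolding S_def by (rule Sr_cont[OF al qS])
  have Sder: "(S has_real_derivative r powr (q - 1) * (1 - r^2) powr \<alpha>) (at r)" if "0 < r" "r < 1" for r
    using Sr_deriv[OF al qS that] by (simp add: S_def q_def)
  have "bounded (S ` {0..1})"
    by (rule compact_imp_bounded[OF compact_continuous_image[OF Scont compact_Icc]])
  then obtain SC where SC0: "\<forall>y\<in>S ` {0..1}. norm y \<le> SC" unfolding bounded_iff by blast
  have SC: "\<And>r. r \<in> {0..1} \<Longrightarrow> \<bar>S r\<bar> \<le> SC" using SC0 by auto
  have "bounded (Bi ` {0..1})"
    by (rule compact_imp_bounded[OF compact_continuous_image[OF Bic compact_Icc]])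
  then obtain BC where BC0: "\<forall>y\<in>Bi ` {0..1}. norm y \<le> BC" unfolding bounded_iff by blast
  have BC: "\<And>r. r \<in> {0..1} \<Longrightarrow> \<bar>Bi r\<bar> \<le> BC" using BC0 by auto
  define E where "E = (\<lambda>s::real. 1 / (2 * (\<alpha> + 1)) * (1 - s^4) powr (\<alpha> + 1))"
  define F where "F = (\<lambda>s t. bf a t * S (max (s^2) (t^2)))"
  define \<psi>S where "\<psi>S = (\<lambda>t. bf a t * S (t^2))"
  define J where "J = (\<lambda>s. integral {0..s} \<psi>S)"
  have bfi: "bf a integrable_on {0..1}" by (rule bf_integrable_on[OF a0 a1])
  have maxin: "max (s'^2) (t^2) \<in> {0..1}" if "0 \<le> s'" "s' \<le> 1" "0 \<le> t" "t \<le> 1" for s' t :: real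
    using that by (auto simp: power_le_one max_def)
  have FL: "set_integrable lborel {0<..<1} (F s') \<and>
      (LINT t:{0<..<1}|lborel. F s' t) = integral {0..1} (F s') \<and> F s' integrable_on {0..1}"
    if s': "0 \<le> s'" "s' \<le> 1" for s'
  proof -
    have sub: "(\<lambda>t. max (s'^2) (t^2)) ` {0<..<1} \<subseteq> {0..1}"
    proof (rule image_subsetI)
      fix t :: real assume "t \<in> {0<..<1}"
      thus "max (s'^2) (t^2) \<in> {0..1}" using maxin[OF s', of t] by simp
    qed
    have c: "continuous_on {0<..<1} (\<lambda>t. S (max (s'^2) (t^2)))"
      by (rule continuous_on_compose2[OF Scont _ sub]) (intro continuous_intros)
    have b: "bounded ((\<lambda>t. S (max (s'^2) (t^2))) ` {0<..<1})"
    proof (rule boundedI[of _ SC])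
      fix y assume "y \<in> (\<lambda>t. S (max (s'^2) (t^2))) ` {0<..<1}"
      then obtain t where t: "t \<in> {0<..<1}" "y = S (max (s'^2) (t^2))" by auto
      have "max (s'^2) (t^2) \<in> {0..1}" by (rule subsetD[OF sub imageI[OF t(1)]])
      thus "norm y \<le> SC" using SC t(2) by auto
    qed
    show ?thesis
      using prod_lint[OF c b bfi bf_nonneg bf_cont_open] unfolding F_def by blast
  qed
  have psiF: "\<psi>S = F 0" by (simp add: \<psi>S_def F_def fun_eq_iff max_def)
  have psiI: "\<psi>S integrable_on {0..1}" using FL[of 0] psiF by simp
  have Jc: "continuous_on {0..1} J"
    unfolding J_def by (rule indefinite_integral_continuous_1[OF psiI])
  have R: "(LINT t:{0<..<1}|lborel. psi_ap \<alpha> p t * K_ap \<alpha> p s t) = S (s^2) * Bi s + (J 1 - J s)"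
  proof -
    have "(LINT t:{0<..<1}|lborel. psi_ap \<alpha> p t * K_ap \<alpha> p s t) = (LINT t:{0<..<1}|lborel. F s t)"
      by (simp add: psi_ap_def K_ap_Sr F_def bf_def a_def S_def)
    also have "\<dots> = integral {0..1} (F s)" using FL[OF assms(4,5)] by blast
    also have "\<dots> = integral {0..s} (F s) + integral {s..1} (F s)"
      by (rule Henstock_Kurzweil_Integration.integral_combine[symmetric, OF assms(4,5)]) (use FL[OF assms(4,5)] in blast)
    also have "integral {0..s} (F s) = integral {0..s} (\<lambda>t. S (s^2) * bf a t)"
    proof (rule integral_cong)
      fix t assume "t \<in> {0..s}"
      hence "t^2 \<le> s^2" by (intro power_mono) auto
      thus "F s t = S (s^2) * bf a t" by (simp add: F_def max_absorb1)
    qed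
    also have "\<dots> = S (s^2) * Bi s" by (simp add: Bi_def)
    also have "integral {s..1} (F s) = integral {s..1} \<psi>S"
    proof (rule integral_cong)
      fix t assume "t \<in> {s..1}"
      hence "s^2 \<le> t^2" using assms(4) by (intro power_mono) auto
      thus "F s t = \<psi>S t" by (simp add: F_def \<psi>S_def max_absorb2)
    qed
    also have "integral {s..1} \<psi>S = J 1 - J s"
      using Henstock_Kurzweil_Integration.integral_combine[OF assms(4,5) psiI] by (simp add: J_def)
    finally show ?thesis .
  qed
  have LHS: "Beta ((2 + \<alpha>) / p) (1 - (2 + \<alpha>) / p) * H_ap \<alpha> p s = B * (S 1 - E s)"
    by (simp add: B_def a_def H_ap_Sr S_def E_def)
  define \<Phi> where "\<Phi> = (\<lambda>x. S (x^2) * Bi x + (J 1 - J x) - B * (S 1 - E x))"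
  have Ec: "continuous_on {0..1} E"
    unfolding E_def using al
    by (intro continuous_intros continuous_on_powr') (auto simp: power_le_one)
  have S2c: "continuous_on {0..1} (\<lambda>x. S (x^2))"
    by (rule continuous_on_compose2[OF Scont]) (auto intro!: continuous_intros simp: power_le_one)
  have \<Phi>c: "continuous_on {0..1} \<Phi>"
    unfolding \<Phi>_def
    by (intro continuous_on_add continuous_on_diff continuous_on_mult continuous_on_const S2c Bic Jc Ec)
  have \<Phi>1: "\<Phi> 1 = 0" by (simp add: \<Phi>_def Bi1 E_def)
  define G1 where "G1 = (\<lambda>t. t powr e * (Bi t / B * (1 - t^4) powr \<alpha>))"
  define G2 where "G2 = (\<lambda>t::real. t^3 * (1 - t^4) powr \<alpha>)"
  define \<Phi>d where "\<Phi>d = (\<lambda>t. 2 * B * (G1 t - G2 t))"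
  have \<Phi>der: "(\<Phi> has_real_derivative \<Phi>d x) (at x)" if x: "0 < x" "x < 1" for x
  proof -
    have x2: "0 < x^2" "x^2 < 1" using x power_strict_mono[of x 1 2] by auto
    have x4: "1 - x^4 > 0" using x power_strict_mono[of x 1 4] by auto
    have sq: "((\<lambda>x. x^2) has_real_derivative 2 * x) (at x)"
      by (auto intro!: derivative_eq_intros)
    have d1: "((\<lambda>x. S (x^2)) has_real_derivative
        ((x^2) powr (q - 1) * (1 - (x^2)^2) powr \<alpha>) * (2 * x)) (at x)"
      by (rule DERIV_chain2[OF Sder[OF x2] sq])
    have d3: "(J has_real_derivative \<psi>S x) (at x)"
    proof -
      have "isCont \<psi>S x"
        unfolding \<psi>S_def by (intro continuous_mult bf_isCont[OF x] DERIV_isCont[OF d1])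
      thus ?thesis unfolding J_def by (rule indef_deriv[OF psiI x])
    qed
    have d4: "(E has_real_derivative -(2 * x^3 * (1 - x^4) powr \<alpha>)) (at x)"
    proof -
      have dd: "((\<lambda>s. 1 - s^4) has_real_derivative -(4 * x^3)) (at x)"
        by (auto intro!: derivative_eq_intros)
      have "((\<lambda>s. (1 - s^4) powr (\<alpha>+1)) has_real_derivative
          (\<alpha>+1) * (1 - x^4) powr (\<alpha> + 1 - of_nat 1) * (-(4 * x^3))) (at x)"
        by (rule DERIV_fun_powr[OF dd x4])
      hence "(E has_real_derivative 1 / (2 * (\<alpha> + 1)) *
          ((\<alpha>+1) * (1 - x^4) powr (\<alpha> + 1 - of_nat 1) * (-(4 * x^3)))) (at x)"
        unfolding E_def by (rule DERIV_cmult)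
      moreover have "1 / (2 * (\<alpha> + 1)) * ((\<alpha>+1) * (1 - x^4) powr (\<alpha> + 1 - of_nat 1) * (-(4 * x^3)))
          = -(2 * x^3 * (1 - x^4) powr \<alpha>)"
        using al by (simp add: field_simps)
      ultimately show ?thesis by simp
    qed
    have "(\<Phi> has_real_derivative
        (((x^2) powr (q - 1) * (1 - (x^2)^2) powr \<alpha>) * (2 * x)) * Bi x + bf a x * S (x^2)
        + (0 - \<psi>S x) - B * (0 - (-(2 * x^3 * (1 - x^4) powr \<alpha>)))) (at x)"
      unfolding \<Phi>_def
      by (intro DERIV_diff DERIV_add DERIV_mult DERIV_const DERIV_cmult d1 dBi[OF x] d3 d4)
    moreover have "(((x^2) powr (q - 1) * (1 - (x^2)^2) powr \<alpha>) * (2 * x)) * Bi x + bf a x * S (x^2)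
        + (0 - \<psi>S x) - B * (0 - (-(2 * x^3 * (1 - x^4) powr \<alpha>))) = \<Phi>d x"
    proof -
      have "(x^2) powr (q - 1) = (x powr 2) powr (q - 1)" using x by simp
      also have "\<dots> = x powr (2 * (q - 1))" by (rule powr_powr)
      finally have "(x^2) powr (q - 1) * x = x powr (2 * (q - 1)) * x powr 1" using x by simp
      also have "\<dots> = x powr (2 * (q - 1) + 1)" by (simp only: powr_add[symmetric])
      also have "\<dots> = x powr e" by (simp add: e_q algebra_simps)
      finally have p1: "(x^2) powr (q - 1) * x = x powr e" .
      have p2: "(x^2)^2 = x^4" by (simp add: power_mult[symmetric])
      have "((x^2) powr (q - 1) * (1 - (x^2)^2) powr \<alpha>) * (2 * x) = 2 * (x powr e) * (1 - x^4) powr \<alpha>"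
        using p1 p2 by (simp add: algebra_simps)
      thus ?thesis using B0 by (simp add: \<Phi>d_def G1_def G2_def \<psi>S_def field_simps)
    qed
    ultimately show ?thesis by simp
  qed
  have FTC: "(\<Phi>d has_integral \<Phi> 1 - \<Phi> 0) {0..1}"
    by (rule fundamental_theorem_of_calculus_interior)
       (use \<Phi>c \<Phi>der in \<open>auto simp: has_real_derivative_iff_has_vector_derivative[symmetric]\<close>)
  have G2int: "(G2 has_integral 1 / (4 * (\<alpha> + 1))) {0..1}"
  proof -
    define A where "A = (\<lambda>t::real. - ((1 - t^4) powr (\<alpha> + 1) / (4 * (\<alpha> + 1))))"
    have Ac: "continuous_on {0..1} A"
      unfolding A_def using al
      by (intro continuous_intros continuous_on_powr') (auto simp: power_le_one)
    have Ad: "(A has_real_derivative G2 x) (at x)" if x: "0 < x" "x < 1" for x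
    proof -
      have x4: "1 - x^4 > 0" using x power_strict_mono[of x 1 4] by auto
      have dd: "((\<lambda>s. 1 - s^4) has_real_derivative -(4 * x^3)) (at x)"
        by (auto intro!: derivative_eq_intros)
      have "((\<lambda>s. (1 - s^4) powr (\<alpha>+1)) has_real_derivative
          (\<alpha>+1) * (1 - x^4) powr (\<alpha> + 1 - of_nat 1) * (-(4 * x^3))) (at x)"
        by (rule DERIV_fun_powr[OF dd x4])
      hence "(A has_real_derivative - ((\<alpha>+1) * (1 - x^4) powr (\<alpha> + 1 - of_nat 1) * (-(4 * x^3))
          / (4 * (\<alpha> + 1)))) (at x)"
        unfolding A_def by (intro DERIV_minus DERIV_cdivide)
      moreover have "- ((\<alpha>+1) * (1 - x^4) powr (\<alpha> + 1 - of_nat 1) * (-(4 * x^3)) / (4 * (\<alpha> + 1)))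
          = G2 x"
        using al by (simp add: G2_def field_simps)
      ultimately show ?thesis by simp
    qed
    have "(G2 has_integral A 1 - A 0) {0..1}"
      by (rule fundamental_theorem_of_calculus_interior)
         (use Ac Ad in \<open>auto simp: has_real_derivative_iff_has_vector_derivative[symmetric]\<close>)
    moreover have "A 1 - A 0 = 1 / (4 * (\<alpha> + 1))" by (simp add: A_def)
    ultimately show ?thesis by simp
  qed
  have G1L: "set_integrable lborel {0<..<1} G1 \<and>
      (LINT t:{0<..<1}|lborel. G1 t) = integral {0..1} G1 \<and> G1 integrable_on {0..1}"
  proof -
    have c: "continuous_on {0<..<1} (\<lambda>t. Bi t / B * (1 - t^4) powr \<alpha>)"
    proof -
      have c1: "continuous_on {0<..<1} Bi" by (rule continuous_on_subset[OF Bic]) auto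
      have c2: "continuous_on {0<..<1} (\<lambda>t::real. (1 - t^4) powr \<alpha>)"
      proof (rule continuous_at_imp_continuous_on, rule ballI)
        fix t :: real assume "t \<in> {0<..<1}"
        hence "1 - t^4 > 0" using power_strict_mono[of t 1 4] by auto
        thus "isCont (\<lambda>t::real. (1 - t^4) powr \<alpha>) t" by (intro continuous_intros) auto
      qed
      show ?thesis using B0
        by (intro continuous_on_mult continuous_on_divide continuous_on_const c1 c2) auto
    qed
    have b: "bounded ((\<lambda>t. Bi t / B * (1 - t^4) powr \<alpha>) ` {0<..<1})"
    proof (rule boundedI[of _ "BC / B"])
      fix y assume "y \<in> (\<lambda>t. Bi t / B * (1 - t^4) powr \<alpha>) ` {0<..<1}"
      then obtain t where t: "t \<in> {0<..<1}" "y = Bi t / B * (1 - t^4) powr \<alpha>" by auto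
      have t4: "t^4 \<le> 1" using t by (auto simp: power_le_one)
      have "\<bar>(1 - t^4) powr \<alpha>\<bar> \<le> 1" using t4 al t by (auto intro!: powr_le1)
      hence "\<bar>Bi t / B\<bar> * \<bar>(1 - t^4) powr \<alpha>\<bar> \<le> \<bar>Bi t / B\<bar> * 1"
        by (intro mult_left_mono) auto
      also have "\<bar>Bi t / B\<bar> \<le> BC / B" using BC[of t] t B0 by (auto simp: divide_right_mono)
      finally show "norm y \<le> BC / B" using t by (simp add: abs_mult)
    qed
    have gi: "(\<lambda>t. t powr e) integrable_on {0..1}"
      by (rule integrable_on_powr_from_0[OF e1]) simp
    have gc: "continuous_on {0<..<1} (\<lambda>t::real. t powr e)"
      by (intro continuous_at_imp_continuous_on ballI continuous_intros) auto
    show ?thesis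
      using prod_lint[OF c b gi _ gc] unfolding G1_def by auto
  qed
  have hypG1: "(LINT t:{0<..<1}|lborel.
            Beta_reg t ((2 + \<alpha>) / p) (1 - (2 + \<alpha>) / p) * t powr (2 * p - 4 * \<alpha> - 5)
            * (1 - t ^ 4) powr \<alpha>) = (LINT t:{0<..<1}|lborel. G1 t)"
  proof (rule set_lebesgue_integral_cong)
    show "{0<..<(1::real)} \<in> sets lborel" by simp
    show "\<forall>x. x \<in> {0<..<1} \<longrightarrow> Beta_reg x ((2 + \<alpha>) / p) (1 - (2 + \<alpha>) / p) * x powr (2 * p - 4 * \<alpha> - 5)
            * (1 - x ^ 4) powr \<alpha> = G1 x"
    proof (intro allI impI)
      fix x :: real assume x: "x \<in> {0<..<1}"
      have "Beta_reg x ((2 + \<alpha>) / p) (1 - (2 + \<alpha>) / p) = Bi x / B"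
        using Beta_inc_eq[OF a0 a1, of x] x by (simp add: Beta_reg_def Bi_def B_def a_def)
      thus "Beta_reg x ((2 + \<alpha>) / p) (1 - (2 + \<alpha>) / p) * x powr (2 * p - 4 * \<alpha> - 5)
            * (1 - x ^ 4) powr \<alpha> = G1 x" by (simp add: G1_def e_def)
    qed
  qed
  have \<Phi>0: "\<Phi> 0 \<ge> 0"
  proof -
    have "(\<Phi>d has_integral 2 * B * (integral {0..1} G1 - 1 / (4 * (\<alpha> + 1)))) {0..1}"
      unfolding \<Phi>d_def
      by (intro has_integral_mult_right has_integral_diff G2int integrable_integral) (use G1L in auto)
    hence "\<Phi> 1 - \<Phi> 0 = 2 * B * (integral {0..1} G1 - 1 / (4 * (\<alpha> + 1)))"
      using FTC by (rule has_integral_unique[rotated])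
    moreover have "integral {0..1} G1 - 1 / (4 * (\<alpha> + 1)) \<le> 0"
      using hyp hypG1 G1L by simp
    ultimately show ?thesis using \<Phi>1 B0 mult_nonneg_nonpos[of "2 * B"] by fastforce
  qed
  define \<phi> where "\<phi> = (\<lambda>t. Bi t / B - t powr m)"
  have sgn: "\<Phi>d t = 2 * B * ((1 - t^4) powr \<alpha> * t powr e) * \<phi> t" if t: "0 < t" "t < 1" for t
  proof -
    have "t powr e * t powr m = t^3"
      using t by (simp add: powr_add[symmetric] em)
    thus ?thesis using B0 by (simp add: \<Phi>d_def G1_def G2_def \<phi>_def field_simps)
  qed
  have fpos: "2 * B * ((1 - t^4) powr \<alpha> * t powr e) > 0" if t: "0 < t" "t < 1" for t
  proof -
    have "1 - t^4 > 0" using t power_strict_mono[of t 1 4] by auto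
    thus ?thesis using B0 t by simp
  qed
  have sl: "\<phi> t1 \<le> 0" if "0 < t0" "t0 < t1" "t1 < 1" "\<phi> t0 < 0" for t0 t1
    using sign_lemma[OF a0 a1 am B0 Bic Bi0 Bi1 dBi, of t0 t1] that unfolding \<phi>_def by auto
  have "\<Phi> s \<ge> 0"
  proof (cases "s = 0 \<or> s = 1")
    case True
    thus ?thesis using \<Phi>0 \<Phi>1 by auto
  next
    case False
    hence s: "0 < s" "s < 1" using assms(4,5) by auto
    show ?thesis
    proof (cases "\<exists>t0. 0 < t0 \<and> t0 \<le> s \<and> \<phi> t0 < 0")
      case True
      then obtain t0 where t0: "0 < t0" "t0 \<le> s" "\<phi> t0 < 0" by blast
      have "\<Phi> 1 \<le> \<Phi> s"
      proof (rule mono_from_deriv'[of s 1 \<Phi> \<Phi>d])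
        show "continuous_on {s..1} \<Phi>" by (rule continuous_on_subset[OF \<Phi>c]) (use s in auto)
        fix x assume x: "s < x" "x < 1"
        thus "(\<Phi> has_real_derivative \<Phi>d x) (at x)" using s by (intro \<Phi>der) auto
        have "\<phi> x \<le> 0" using sl[of t0 x] t0 x by auto
        thus "\<Phi>d x \<le> 0" using sgn[of x] fpos[of x] x s
          by (simp add: mult_nonneg_nonpos less_imp_le)
      qed (use s in auto)
      thus ?thesis using \<Phi>1 by simp
    next
      case False
      have "\<Phi> 0 \<le> \<Phi> s"
      proof (rule mono_from_deriv[of 0 s \<Phi> \<Phi>d])
        show "continuous_on {0..s} \<Phi>" by (rule continuous_on_subset[OF \<Phi>c]) (use s in auto)
        fix x assume x: "0 < x" "x < s"
        thus "(\<Phi> has_real_derivative \<Phi>d x) (at x)" using s by (intro \<Phi>der) auto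
        have "\<not> (0 < x \<and> x \<le> s \<and> \<phi> x < 0)" using False by blast
        hence "\<phi> x \<ge> 0" using x by auto
        thus "\<Phi>d x \<ge> 0" using sgn[of x] fpos[of x] x s by simp
      qed (use s in auto)
      thus ?thesis using \<Phi>0 by simp
    qed
  qed
  thus ?thesis unfolding LHS R by (simp add: \<Phi>_def)
qed

end
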